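(* Let $f:[\frac13,2]\to[\frac13,2]$ be defined by $f(x)=2x$ if $x\in[\frac13,1)$ and $f(x)=\frac{x}{3}$ if $x\in[1,2]$. For every nonempty open interval $I\subseteq[\frac13,2]$ there exists an integer $N$ such that for every $x\in[\frac13,2]$ and every $n\ge0$ with $f^n(x)\in I$, there is $m$ with $n<m\le n+N$ and $f^m(x)\in I$; i.e. the number of iterations of $f$ between two successive visits of an orbit to $I$ is bounded uniformly. *)

theory Defs
  imports Complex_Main
begin

text \<open>The map f on [1/3,2]: f(x) = 2x on [1/3,1), f(x) = x/3 on [1,2].
  Outside [1/3,2] the value is irrelevant (the domain is invariant).\<close>
definition fmap :: "real \<Rightarrow> real" where
  "fmap x = (if x < 1 then 2 * x else x / 3)"

end

theory Submission imports Defs "HOL-Analysis.Kronecker_Approximation_Theorem" begin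

lemma step_pos:
  fixes A B u r l :: real
  assumes "l>0" "r > 0" "r < B - A"
  shows "\<exists>j::nat. 1 \<le> j \<and> real j \<le> l/r + 2 \<and> (\<exists>t::int. A < u + j*r + t*l \<and> u + j*r + t*l < B)"
proof -
  define t where "t = floor ((A - u - r)/l)"
  define v where "v = u + r + t*l"
  have t1: "t \<le> (A - u - r)/l" "(A - u - r)/l < t + 1" unfolding t_def by linarith+
  have "t*l \<le> A - u - r" using t1(1) assms(1) by (simp add: le_divide_eq mult.commute)
  hence v1: "v \<le> A" unfolding v_def by linarith
  have "A - u - r < (t+1)*l" using t1(2) assms(1) by (simp add: divide_less_eq mult.commute)
  hence v2: "A - v < l" unfolding v_def by (simp add: algebra_simps)
  define d where "d = A - v"
  define i where "i = floor (d/r)"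
  have d0: "d \<ge> 0" using v1 d_def by simp
  have i0: "i \<ge> 0" using d0 assms(2) i_def by simp
  have i1: "i \<le> d/r" "d/r < i + 1" unfolding i_def by linarith+
  have ir1: "i*r \<le> d" using i1(1) assms(2) by (simp add: le_divide_eq mult.commute)
  have ir2: "d < (i+1)*r" using i1(2) assms(2) by (simp add: divide_less_eq mult.commute)
  define j where "j = nat i + 2"
  have jr: "real j = i + 2" using i0 j_def by simp
  have val: "u + j*r + t*l = v + (i+1)*r" unfolding v_def jr by (simp add: algebra_simps)
  have "d/r \<le> l/r" using d_def v2 assms(2) by (simp add: divide_right_mono)
  hence "real j \<le> l/r + 2" using jr i1(1) by simp
  moreover have "A < u + j*r + t*l \<and> u + j*r + t*l < B"
    unfolding val using ir1 ir2 d_def assms by (simp add: algebra_simps)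
  moreover have "1 \<le> j" unfolding j_def by simp
  ultimately show ?thesis by blast
qed

lemma step_neg:
  fixes A B u r l :: real
  assumes "l>0" "r > 0" "r < B - A"
  shows "\<exists>j::nat. 1 \<le> j \<and> real j \<le> l/r + 2 \<and> (\<exists>t::int. A < u - j*r + t*l \<and> u - j*r + t*l < B)"
proof -
  obtain j t where "1 \<le> j" "real j \<le> l/r + 2" "-B < -u + j*r + real_of_int t*l" "-u + j*r + t*l < -A"
    using step_pos[of l r "-A" "-B" "-u"] assms by auto
  then show ?thesis by (intro exI[of _ j] conjI exI[of _ "-t"]) auto
qed

lemma fmap_in: "x \<in> {1/3..2} \<Longrightarrow> fmap x \<in> {1/3..(2::real)}"
  unfolding fmap_def by auto

lemma ln6: "ln (6::real) = ln 2 + ln 3"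
  using ln_mult[of 2 3] by simp

lemma orbit:
  assumes "x \<in> {1/3..(2::real)}"
  shows "(fmap^^n) x \<in> {1/3..2} \<and> (\<exists>q::int. ln ((fmap^^n) x) = ln x + n*ln 2 - q*ln 6)"
proof (induction n)
  case 0
  then show ?case using assms by (auto intro: exI[of _ 0])
next
  case (Suc n)
  define y where "y = (fmap^^n) x"
  from Suc obtain q where y: "y \<in> {1/3..2}" "ln y = ln x + n*ln 2 - real_of_int q*ln 6" unfolding y_def by auto
  have ypos: "y > 0" using y(1) by auto
  have "(fmap^^Suc n) x = fmap y" unfolding y_def by simp
  moreover have "fmap y \<in> {1/3..2}" using fmap_in y(1) by blast
  moreover have "\<exists>q::int. ln (fmap y) = ln x + Suc n*ln 2 - q*ln 6"
  proof (cases "y < 1")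
    case True
    then have "ln (fmap y) = ln 2 + ln y" unfolding fmap_def using ypos ln_mult[of 2 y] by simp
    then show ?thesis using y(2) by (intro exI[of _ q]) (simp add: algebra_simps)
  next
    case False
    then have "ln (fmap y) = ln y - ln 3" unfolding fmap_def using ypos ln_div[of y 3] by simp
    then show ?thesis using y(2) ln6 by (intro exI[of _ "q+1"]) (simp add: algebra_simps)
  qed
  ultimately show ?case by simp
qed

lemma uniq:
  fixes y1 y2 :: real and t :: int
  assumes "y1 \<in> {1/3<..<2}" "y2 \<in> {1/3..2}" "ln y1 - ln y2 = t*ln 6"
  shows "y1 = y2"
proof -
  have p: "y1 > 0" "y2 > 0" using assms by auto
  have "ln y1 < ln 2" "ln y1 > ln (1/3)" using assms(1) p by auto
  moreover have "ln y2 \<le> ln 2" "ln y2 \<ge> ln (1/3)" using assms(2) p by auto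
  moreover have "ln (1/3::real) = - ln 3" by (simp add: ln_div)
  ultimately have c: "t*ln 6 < ln 6" "t * ln 6 > - ln 6" using assms(3) ln6 by linarith+
  have l6: "ln (6::real) > 0" by simp
  have "t = 0"
  proof (rule ccontr)
    assume "t \<noteq> 0"
    then consider "t \<ge> 1" | "t \<le> -1" by linarith
    then show False
    proof cases
      case 1
      hence "real_of_int t * ln 6 \<ge> 1 * ln 6" using l6 by (intro mult_right_mono) auto
      then show False using c by simp
    next
      case 2
      hence "real_of_int t * ln 6 \<le> (-1) * ln 6" using l6 by (intro mult_right_mono) auto
      then show False using c by simp
    qed
  qed
  hence "ln y1 = ln y2" using assms(3) by simp
  thus ?thesis using p by simp
qed

theorem mainTheorem3:
  fixes a b :: real
  assumes "1/3 \<le> a" and "a < b" and "b \<le> 2"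
  shows "\<exists>N::nat. \<forall>x \<in> {1/3..2}. \<forall>n::nat.
           (fmap ^^ n) x \<in> {a<..<b} \<longrightarrow>
           (\<exists>m. n < m \<and> m \<le> n + N \<and> (fmap ^^ m) x \<in> {a<..<b})"
proof -
  define l where "l = ln (6::real)"
  define A where "A = ln a"
  define B where "B = ln b"
  have apos: "a > 0" using assms by simp
  have lpos: "l > 0" unfolding l_def by simp
  have AB: "A < B" unfolding A_def B_def using apos assms by simp
  have "(B - A)/l > 0" using AB lpos by simp
  then obtain Nd::nat where Nd: "Nd > 0" "1/Nd < (B-A)/l"
    by (metis gr_zeroI inverse_eq_divide real_arch_inverse)
  obtain h k where hk: "0 < k" "\<bar>of_int k * (ln 2 / l) - of_int h\<bar> < 1/Nd"
    using Dirichlet_approx[OF Nd(1), of "ln 2 / l"] by blast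
  define r where "r = k*ln 2 - h*l"
  have "r = l * (of_int k * (ln 2 / l) - of_int h)" unfolding r_def using lpos by (simp add: algebra_simps)
  hence "\<bar>r\<bar> = l * \<bar>of_int k * (ln 2 / l) - of_int h\<bar>" using lpos by (simp add: abs_mult)
  also have "\<dots> < l * (1/Nd)" using hk(2) lpos by (rule mult_strict_left_mono)
  also have "\<dots> < l * ((B-A)/l)" using Nd(2) lpos by (rule mult_strict_left_mono)
  also have "\<dots> = B - A" using lpos by simp
  finally have rlt: "\<bar>r\<bar> < B - A" .
  have rne: "r \<noteq> 0"
  proof
    assume "r = 0"
    hence e: "k * ln 2 = h * l" unfolding r_def by simp
    show False
    proof (cases "h \<le> 0")
      case True
      have "k * ln 2 > 0" using hk(1) by simp
      moreover have "h * l \<le> 0" using True lpos by (simp add: mult_nonpos_nonneg)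
      ultimately show False using e by simp
    next
      case False
      have "ln ((2::real) ^ nat k) = ln ((6::real) ^ nat h)"
        using e hk(1) False unfolding l_def by (simp add: ln_realpow)
      hence "(2::real) ^ nat k = 6 ^ nat h" by simp
      hence "(2::nat) ^ nat k = 6 ^ nat h" by (metis of_nat_eq_iff of_nat_numeral of_nat_power)
      moreover have "(3::nat) dvd 6 ^ nat h" 
      proof -
        have "(3::nat) dvd 6" by simp
        moreover have "nat h > 0" using False by simp
        ultimately show ?thesis using dvd_power[of "nat h" "6::nat"] dvd_trans by blast
      qed
      ultimately have "(3::nat) dvd 2 ^ nat k" by simp
      hence "(3::nat) dvd 2" using prime_dvd_power[of "3::nat" 2 "nat k"] by simp
      thus False by simp
    qed
  qed
  define M where "M = nat (ceiling (l/\<bar>r\<bar>)) + 2"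
  show ?thesis
  proof (rule exI[of _ "nat k * M"], intro ballI allI impI)
    fix x n assume x: "x \<in> {1/3..(2::real)}" and "(fmap ^^ n) x \<in> {a<..<b}"
    define z where "z = (fmap ^^ n) x"
    have z: "z \<in> {1/3..2}" using orbit[OF x] z_def by blast
    hence zpos: "z > 0" by auto
    define u where "u = ln z"
    have "\<exists>j::nat. 1 \<le> j \<and> real j \<le> l/\<bar>r\<bar> + 2 \<and> (\<exists>t::int. A < u + j*r + t*l \<and> u + j*r + t*l < B)"
    proof (cases "r > 0")
      case True
      then show ?thesis using step_pos[OF lpos True, of B A u] rlt by simp
    next
      case False
      hence "-r > 0" using rne by simp
      then show ?thesis using step_neg[OF lpos, of "-r" B A u] rlt False by simp
    qed
    then obtain j t where j: "1 \<le> j" "real j \<le> l/\<bar>r\<bar> + 2"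
      and t: "A < u + j*r + real_of_int t*l" "u + j*r + real_of_int t*l < B" by blast
    define m where "m = j * nat k + n"
    have fm: "(fmap ^^ m) x = (fmap ^^ (j * nat k)) z" unfolding m_def z_def by (simp add: funpow_add)
    obtain q where q: "ln ((fmap ^^ (j * nat k)) z) = u + (j * nat k)*ln 2 - real_of_int q*l"
      using orbit[OF z, of "j * nat k"] unfolding u_def l_def by blast
    have y2: "(fmap ^^ (j * nat k)) z \<in> {1/3..2}" using orbit[OF z] by blast
    define y1 where "y1 = exp (u + j*r + real_of_int t*l)"
    have "exp A < y1" "y1 < exp B" using t unfolding y1_def by simp_all
    hence y1ab: "y1 \<in> {a<..<b}" unfolding A_def B_def using apos assms by simp
    hence y1in: "y1 \<in> {1/3<..<2}" using assms by auto
    have kk: "real (nat k) = real_of_int k" using hk(1) by simp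
    have "ln y1 - ln ((fmap ^^ (j * nat k)) z) = of_int (t + q - int j * h) * l"
      unfolding y1_def q r_def by (simp add: algebra_simps kk)
    hence "y1 = (fmap ^^ (j * nat k)) z" using uniq[OF y1in y2] unfolding l_def by blast
    hence "(fmap ^^ m) x \<in> {a<..<b}" using fm y1ab by simp
    moreover have "n < m" unfolding m_def using j(1) hk(1) by simp
    moreover have jM: "j \<le> M" unfolding M_def using j(2) by linarith
    have "m \<le> n + nat k * M" using jM unfolding m_def by (simp add: mult.commute)
    ultimately show "\<exists>m. n < m \<and> m \<le> n + nat k * M \<and> (fmap ^^ m) x \<in> {a<..<b}" by blast
  qed
qed

end
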